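(* Let $M_b=\langle S_b,A_b,T_b\rangle$ be the $b$-bounded MDP of a relational MDP $K=\langle\Sigma,\Delta\rangle$, $\phi$ a relational pCTL sentence, and $C=consts(\phi)\cup consts(\Delta)$. Let $s_1,s_2\in S_b$ with $s_1\sim_C s_2$ via the bijection $f$ (extended by the identity on $C$), and let $\delta=\{H_1\xleftarrow{p_1:\alpha}B,\dots,H_n\xleftarrow{p_n:\alpha}B\}\in\Delta$. For a substitution $\theta_1$ with $s_1\preceq_{\theta_1}B$ and the corresponding indistinguishable substitution $\theta_2=f\circ\theta_1$, consider the ground transition sets $$t(s_1,\alpha\theta_1)=\{h_{1,i}\xleftarrow{p_i:\alpha\theta_1}s_1 \mid H_i\xleftarrow{p_i:\alpha}B\in\delta,\ h_{1,i}=(s_1\setminus B\theta_1)\cup H_i\theta_1\},$$ $$t(s_2,\alpha\theta_2)=\{h_{2,i}\xleftarrow{p_i:\alpha\theta_2}s_2 \mid H_i\xleftarrow{p_i:\alpha}B\in\delta,\ h_{2,i}=(s_2\setminus B\theta_2)\cup H_i\theta_2\}.$$ Then these two sets of ground transitions share the same transition probabilities: $s_1$ under $\alpha\theta_1$ and $s_2$ under $\alpha\theta_2$ have identical probabilities of going to each class of mutually indistinguishable states (under $C$).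
   Context: Relational logic: terms are variables or constants; atoms $p(t_1,\dots,t_m)$; an abstract state is a finite set of atoms. Object identity assumption: distinct terms in a conjunction denote distinct objects. OI-subsumption: $A\preceq_\theta B$ iff $\theta$ is a substitution with $B\theta\subseteq A$ mapping distinct terms of $B$ to distinct terms. A Herbrand interpretation is a set of ground atoms; $\mathit{adom}(s)=consts(s)$. Relational MDP $K=\langle\Sigma,\Delta\rangle$, $\Sigma=\langle R,D\rangle$ ($R$ finite relation symbols, $D$ possibly infinite constants); $\Delta$ a finite set of abstract transitions, each a set of rules $\{H_1\xleftarrow{p_1:\alpha}B,\dots,H_n\xleftarrow{p_n:\alpha}B\}$ with abstract states $H_i,B$, $p_i\in[0,1]$, $\sum_ip_i=1$, $vars(H_i)\subseteq vars(B)$. The underlying ground MDP has Herbrand interpretations as states; from $s$, for each $\theta$ with $s\preceq_\theta B$, action $\alpha\theta$ leads to $(s\setminus B\theta)\cup H_i\theta$ with probability $p_i$. The $b$-bounded MDP $M_b$ restricts to states $s$ with $|\mathit{adom}(s)|\le b$ and transitions between such states. Indistinguishability: for states $s,s'$ with $C\subseteq consts(s)\cap consts(s')$, $s\sim_C s'$ iff there is a bijection $f:consts(s)\setminus C\to consts(s')\setminus C$ such that renaming the constants of $s$ by $f$ (fixing $C$) yields $s'$, i.e. $f(s)=s'$. Indistinguishable states are renamings of one another on the constants outside $C$. *)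

theory Defs
  imports Complex_Main
begin

datatype ('c, 'v) trm = Var 'v | Cst 'c

type_synonym ('r, 'c, 'v) atom = "'r \<times> ('c, 'v) trm list"
type_synonym ('r, 'c) gatom = "'r \<times> 'c list"

fun trm_consts :: "('c, 'v) trm \<Rightarrow> 'c set" where
  "trm_consts (Var v) = {}"
| "trm_consts (Cst c) = {c}"

fun trm_vars :: "('c, 'v) trm \<Rightarrow> 'v set" where
  "trm_vars (Var v) = {v}"
| "trm_vars (Cst c) = {}"

definition atom_consts :: "('r, 'c, 'v) atom \<Rightarrow> 'c set" where
  "atom_consts a = (\<Union>t\<in>set (snd a). trm_consts t)"

definition atom_vars :: "('r, 'c, 'v) atom \<Rightarrow> 'v set" where
  "atom_vars a = (\<Union>t\<in>set (snd a). trm_vars t)"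

definition abs_consts :: "('r, 'c, 'v) atom set \<Rightarrow> 'c set" where
  "abs_consts A = (\<Union>a\<in>A. atom_consts a)"

definition abs_vars :: "('r, 'c, 'v) atom set \<Rightarrow> 'v set" where
  "abs_vars A = (\<Union>a\<in>A. atom_vars a)"

definition abs_terms :: "('r, 'c, 'v) atom set \<Rightarrow> ('c, 'v) trm set" where
  "abs_terms A = (\<Union>a\<in>A. set (snd a))"

definition gconsts :: "('r, 'c) gatom set \<Rightarrow> 'c set" where
  "gconsts s = (\<Union>a\<in>s. set (snd a))"

abbreviation adom :: "('r, 'c) gatom set \<Rightarrow> 'c set" where
  "adom s \<equiv> gconsts s"

fun subst_trm :: "('v \<Rightarrow> 'c) \<Rightarrow> ('c, 'v) trm \<Rightarrow> 'c" where
  "subst_trm \<theta> (Var v) = \<theta> v"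
| "subst_trm \<theta> (Cst c) = c"

definition subst_atom :: "('v \<Rightarrow> 'c) \<Rightarrow> ('r, 'c, 'v) atom \<Rightarrow> ('r, 'c) gatom" where
  "subst_atom \<theta> a = (fst a, map (subst_trm \<theta>) (snd a))"

definition subst_state :: "('v \<Rightarrow> 'c) \<Rightarrow> ('r, 'c, 'v) atom set \<Rightarrow> ('r, 'c) gatom set" where
  "subst_state \<theta> A = subst_atom \<theta> ` A"

definition oi_subsumes :: "('r, 'c) gatom set \<Rightarrow> ('v \<Rightarrow> 'c) \<Rightarrow> ('r, 'c, 'v) atom set \<Rightarrow> bool" where
  "oi_subsumes s \<theta> B \<longleftrightarrow> subst_state \<theta> B \<subseteq> s \<and> inj_on (subst_trm \<theta>) (abs_terms B)"

text \<open>An abstract transition {H_i <-(p_i : alpha)- B}: body B, action atom alpha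
  (action symbols of type 'act), and the list of heads with probabilities.\<close>
datatype ('r, 'act, 'c, 'v) abs_trans =
  ATrans (body: "('r, 'c, 'v) atom set") (act: "('act, 'c, 'v) atom")
         (rules: "(('r, 'c, 'v) atom set \<times> real) list")

definition trans_consts :: "('r, 'act, 'c, 'v) abs_trans \<Rightarrow> 'c set" where
  "trans_consts \<delta> = abs_consts (body \<delta>) \<union> atom_consts (act \<delta>)
      \<union> (\<Union>r\<in>set (rules \<delta>). abs_consts (fst r))"

definition rmdp_consts :: "('r, 'act, 'c, 'v) abs_trans set \<Rightarrow> 'c set" where
  "rmdp_consts \<Delta> = (\<Union>\<delta>\<in>\<Delta>. trans_consts \<delta>)"

definition wf_trans :: "'r set \<Rightarrow> 'c set \<Rightarrow> ('r, 'act, 'c, 'v) abs_trans \<Rightarrow> bool" where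
  "wf_trans R D \<delta> \<longleftrightarrow>
     finite (body \<delta>) \<and> fst ` body \<delta> \<subseteq> R \<and>
     (\<forall>r\<in>set (rules \<delta>). finite (fst r) \<and> fst ` fst r \<subseteq> R \<and>
        0 \<le> snd r \<and> snd r \<le> 1 \<and> abs_vars (fst r) \<subseteq> abs_vars (body \<delta>)) \<and>
     sum_list (map snd (rules \<delta>)) = 1 \<and>
     trans_consts \<delta> \<subseteq> D"

definition wf_rmdp :: "'r set \<Rightarrow> 'c set \<Rightarrow> ('r, 'act, 'c, 'v) abs_trans set \<Rightarrow> bool" where
  "wf_rmdp R D \<Delta> \<longleftrightarrow> finite R \<and> finite \<Delta> \<and> (\<forall>\<delta>\<in>\<Delta>. wf_trans R D \<delta>)"

definition bstates :: "'r set \<Rightarrow> 'c set \<Rightarrow> nat \<Rightarrow> ('r, 'c) gatom set set" where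
  "bstates R D b = {s. (\<forall>a\<in>s. fst a \<in> R \<and> set (snd a) \<subseteq> D) \<and>
                        finite (adom s) \<and> card (adom s) \<le> b}"

definition successor :: "('r, 'c) gatom set \<Rightarrow> ('v \<Rightarrow> 'c) \<Rightarrow> ('r, 'c, 'v) atom set
                          \<Rightarrow> ('r, 'c, 'v) atom set \<Rightarrow> ('r, 'c) gatom set" where
  "successor s \<theta> B H = (s - subst_state \<theta> B) \<union> subst_state \<theta> H"

definition rename :: "('c \<Rightarrow> 'c) \<Rightarrow> ('r, 'c) gatom set \<Rightarrow> ('r, 'c) gatom set" where
  "rename f s = (\<lambda>a. (fst a, map f (snd a))) ` s"

definition ext_id :: "'c set \<Rightarrow> ('c \<Rightarrow> 'c) \<Rightarrow> 'c \<Rightarrow> 'c" where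
  "ext_id C f c = (if c \<in> C then c else f c)"

definition indist_via :: "'c set \<Rightarrow> ('c \<Rightarrow> 'c) \<Rightarrow> ('r, 'c) gatom set \<Rightarrow> ('r, 'c) gatom set \<Rightarrow> bool" where
  "indist_via C f s s' \<longleftrightarrow> C \<subseteq> gconsts s \<inter> gconsts s' \<and>
     bij_betw f (gconsts s - C) (gconsts s' - C) \<and> rename (ext_id C f) s = s'"

definition indist :: "'c set \<Rightarrow> ('r, 'c) gatom set \<Rightarrow> ('r, 'c) gatom set \<Rightarrow> bool" where
  "indist C s s' \<longleftrightarrow> (\<exists>f. indist_via C f s s')"

text \<open>Probability that s, under action alpha\<theta> of transition \<delta>, goes to the
  ~_C-class of s'.\<close>
definition class_prob :: "'c set \<Rightarrow> ('r, 'c) gatom set \<Rightarrow> ('v \<Rightarrow> 'c)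
     \<Rightarrow> ('r, 'act, 'c, 'v) abs_trans \<Rightarrow> ('r, 'c) gatom set \<Rightarrow> real" where
  "class_prob C s \<theta> \<delta> s' =
     sum_list [snd r. r \<leftarrow> rules \<delta>, indist C (successor s \<theta> (body \<delta>) (fst r)) s']"

end

theory Submission
  imports Defs
begin

lemma gconsts_rename: "gconsts (rename g s) = g ` gconsts s"
  unfolding gconsts_def rename_def by auto

lemma rename_comp: "rename g (rename h s) = rename (g \<circ> h) s"
  unfolding rename_def by (auto simp: image_image)

lemma rename_cong: "(\<And>c. c \<in> gconsts s \<Longrightarrow> g c = h c) \<Longrightarrow> rename g s = rename h s"
  unfolding rename_def gconsts_def
  by (rule image_cong) (auto intro!: map_cong)

lemma rename_id: "rename id s = s"
  unfolding rename_def by auto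

lemma indist_via_trans:
  assumes "indist_via C f s t" "indist_via C f' t u"
  shows "indist_via C (f' \<circ> f) s u"
proof -
  have b1: "bij_betw f (gconsts s - C) (gconsts t - C)" using assms(1) by (simp add: indist_via_def)
  have "rename (ext_id C f') (rename (ext_id C f) s) = rename (ext_id C (f' \<circ> f)) s"
    unfolding rename_comp
  proof (rule rename_cong)
    fix c assume "c \<in> gconsts s"
    then show "(ext_id C f' \<circ> ext_id C f) c = ext_id C (f' \<circ> f) c"
      using b1 unfolding ext_id_def bij_betw_def by auto
  qed
  then show ?thesis using assms unfolding indist_via_def
    by (auto intro: bij_betw_trans)
qed

lemma indist_via_sym:
  assumes "indist_via C f s t"
  shows "indist_via C (the_inv_into (gconsts s - C) f) t s"
proof -
  have b1: "bij_betw f (gconsts s - C) (gconsts t - C)" and r: "rename (ext_id C f) s = t"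
    using assms by (auto simp add: indist_via_def)
  let ?g = "the_inv_into (gconsts s - C) f"
  have "rename (ext_id C ?g) t = rename (ext_id C ?g \<circ> ext_id C f) s"
    using r rename_comp by metis
  also have "\<dots> = rename id s"
  proof (rule rename_cong)
    fix c assume "c \<in> gconsts s"
    then show "(ext_id C ?g \<circ> ext_id C f) c = id c"
      using b1 unfolding ext_id_def bij_betw_def
      by (auto simp: the_inv_into_f_f)
  qed
  finally show ?thesis using assms b1 rename_id unfolding indist_via_def
    by (auto intro: bij_betw_the_inv_into)
qed

lemma indist_transfer:
  assumes inj: "inj_on (ext_id C f) (gconsts h1)"
    and out: "\<forall>c\<in>gconsts h1 - C. f c \<notin> C"
    and h2: "h2 = rename (ext_id C f) h1"
  shows "indist C h1 s' = indist C h2 s'"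
proof -
  have g2: "gconsts h2 = ext_id C f ` gconsts h1" using h2 gconsts_rename by metis
  have CC: "C \<inter> gconsts h2 = C \<inter> gconsts h1"
    using g2 out unfolding ext_id_def by force
  show ?thesis
  proof (cases "C \<subseteq> gconsts h1")
    case False
    then have "\<not> C \<subseteq> gconsts h2" using CC by blast
    then show ?thesis using False unfolding indist_def indist_via_def by blast
  next
    case True
    have img: "gconsts h2 - C = f ` (gconsts h1 - C)"
      using g2 out unfolding ext_id_def by force
    have "inj_on f (gconsts h1 - C)"
      using inj unfolding inj_on_def ext_id_def by force
    then have "bij_betw f (gconsts h1 - C) (gconsts h2 - C)"
      using img by (simp add: bij_betw_def)
    then have v: "indist_via C f h1 h2"
      using True CC h2 unfolding indist_via_def by blast
    show ?thesis unfolding indist_def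
      using indist_via_trans[OF v] indist_via_trans[OF indist_via_sym[OF v]] by blast
  qed
qed

lemma subst_state_rename:
  assumes "abs_consts A \<subseteq> C" "\<theta>2 = (\<lambda>v. ext_id C f (\<theta>1 v))"
  shows "subst_state \<theta>2 A = rename (ext_id C f) (subst_state \<theta>1 A)"
proof -
  have "subst_atom \<theta>2 a = (fst (subst_atom \<theta>1 a), map (ext_id C f) (snd (subst_atom \<theta>1 a)))"
    if "a \<in> A" for a
  proof -
    have "subst_trm \<theta>2 t = ext_id C f (subst_trm \<theta>1 t)" if "t \<in> set (snd a)" for t
    proof (cases t)
      case (Var v) then show ?thesis using assms(2) by simp
    next
      case (Cst c)
      then have "c \<in> C" using that \<open>a \<in> A\<close> assms(1)
        unfolding abs_consts_def atom_consts_def by force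
      then show ?thesis using Cst by (simp add: ext_id_def)
    qed
    then show ?thesis by (simp add: subst_atom_def)
  qed
  then show ?thesis unfolding subst_state_def rename_def image_image by auto
qed

lemma gconsts_subst:
  "gconsts (subst_state \<theta> A) \<subseteq> abs_consts A \<union> \<theta> ` abs_vars A"
proof
  fix c assume "c \<in> gconsts (subst_state \<theta> A)"
  then obtain a t where "a \<in> A" "t \<in> set (snd a)" "c = subst_trm \<theta> t"
    unfolding gconsts_def subst_state_def subst_atom_def by auto
  then show "c \<in> abs_consts A \<union> \<theta> ` abs_vars A"
  proof (cases t)
    case (Var v)
    then have "v \<in> abs_vars A" using \<open>a \<in> A\<close> \<open>t \<in> set (snd a)\<close>
      unfolding abs_vars_def atom_vars_def by force
    then show ?thesis using Var \<open>c = subst_trm \<theta> t\<close> by simp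
  next
    case (Cst d)
    then have "d \<in> abs_consts A" using \<open>a \<in> A\<close> \<open>t \<in> set (snd a)\<close>
      unfolding abs_consts_def atom_consts_def by force
    then show ?thesis using Cst \<open>c = subst_trm \<theta> t\<close> by simp
  qed
qed

lemma vars_in_subst:
  "\<theta> ` abs_vars A \<subseteq> gconsts (subst_state \<theta> A)"
proof
  fix c assume "c \<in> \<theta> ` abs_vars A"
  then obtain a v where "a \<in> A" "Var v \<in> set (snd a)" "c = \<theta> v"
    unfolding abs_vars_def atom_vars_def
    by auto (metis empty_iff singletonD trm.exhaust trm_vars.simps)
  then show "c \<in> gconsts (subst_state \<theta> A)"
    unfolding gconsts_def subst_state_def subst_atom_def by force
qed

lemma ext_id_inj:
  assumes b1: "bij_betw f (A - C) (B - C)"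
  shows "inj_on (ext_id C f) A"
proof (rule inj_onI)
  fix x y assume xy: "x \<in> A" "y \<in> A" "ext_id C f x = ext_id C f y"
  have fi: "inj_on f (A - C)" and fo: "f ` (A - C) = B - C"
    using b1 by (auto simp: bij_betw_def)
  have o: "f z \<notin> C" if "z \<in> A" "z \<notin> C" for z using fo that by blast
  show "x = y"
  proof (cases "x \<in> C")
    case True
    show ?thesis
    proof (cases "y \<in> C")
      case True then show ?thesis using xy(3) \<open>x \<in> C\<close> by (simp add: ext_id_def)
    next
      case False then show ?thesis using xy(3) \<open>x \<in> C\<close> o[OF xy(2)] by (auto simp add: ext_id_def)
    qed
  next
    case False
    show ?thesis
    proof (cases "y \<in> C")
      case True then show ?thesis using xy(3) \<open>x \<notin> C\<close> o[OF xy(1)] by (auto simp add: ext_id_def)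
    next
      case False then show ?thesis using xy \<open>x \<notin> C\<close> fi by (auto simp add: ext_id_def inj_on_def)
    qed
  qed
qed

lemma rename_inj:
  assumes injg: "inj_on g (gconsts s)"
  shows "inj_on (\<lambda>a. (fst a, map g (snd a))) s"
proof (rule inj_onI)
  fix x y assume xy: "x \<in> s" "y \<in> s" "(\<lambda>a. (fst a, map g (snd a))) x = (\<lambda>a. (fst a, map g (snd a))) y"
  have sx: "set (snd x) \<subseteq> gconsts s" and sy: "set (snd y) \<subseteq> gconsts s"
    using xy(1,2) unfolding gconsts_def by auto
  have ij: "inj_on g (set (snd x) \<union> set (snd y))"
    by (rule inj_on_subset[OF injg]) (use sx sy in blast)
  have me: "map g (snd x) = map g (snd y)" and f: "fst x = fst y" using xy(3) by simp_all
  have "snd x = snd y" by (rule map_inj_on[OF me ij])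
  then show "x = y" using f by (simp add: prod_eq_iff)
qed

lemma gconsts_mono: "A \<subseteq> B \<Longrightarrow> gconsts A \<subseteq> gconsts B"
  unfolding gconsts_def by (rule UN_mono) auto

lemma gconsts_Un: "gconsts (A \<union> B) = gconsts A \<union> gconsts B"
  unfolding gconsts_def by (rule UN_Un)

lemma sum_comp_cong:
  "(\<And>r. r \<in> set xs \<Longrightarrow> P r = Q r) \<Longrightarrow>
   sum_list [snd r. r \<leftarrow> xs, P r] = sum_list [snd r. r \<leftarrow> xs, Q r]"
  by (induction xs) auto

theorem proposition2:
  fixes R :: "'r set" and D :: "'c set" and \<Delta> :: "('r, 'act, 'c, 'v) abs_trans set"
    and b :: nat and Cphi C :: "'c set" and f :: "'c \<Rightarrow> 'c"
    and s1 s2 :: "('r, 'c) gatom set" and \<delta> :: "('r, 'act, 'c, 'v) abs_trans"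
    and \<theta>1 \<theta>2 :: "'v \<Rightarrow> 'c"
  assumes "wf_rmdp R D \<Delta>"
    and "finite Cphi" and "Cphi \<subseteq> D"
    and "C = Cphi \<union> rmdp_consts \<Delta>"
    and "s1 \<in> bstates R D b" and "s2 \<in> bstates R D b"
    and "indist_via C f s1 s2"
    and "\<delta> \<in> \<Delta>"
    and "oi_subsumes s1 \<theta>1 (body \<delta>)"
    and "\<theta>2 = (\<lambda>v. ext_id C f (\<theta>1 v))"
  shows "\<forall>s'. class_prob C s1 \<theta>1 \<delta> s' = class_prob C s2 \<theta>2 \<delta> s'"
proof
  fix s'
  let ?g = "ext_id C f"
  let ?B = "body \<delta>"
  have tc: "trans_consts \<delta> \<subseteq> C" using assms(4,8) unfolding rmdp_consts_def by blast
  have BC: "abs_consts ?B \<subseteq> C" using tc unfolding trans_consts_def by blast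
  have wf: "wf_trans R D \<delta>" using assms(1,8) unfolding wf_rmdp_def by blast
  have b1: "bij_betw f (gconsts s1 - C) (gconsts s2 - C)" and r12: "rename ?g s1 = s2"
    and Cs1: "C \<subseteq> gconsts s1"
    using assms(7) unfolding indist_via_def by blast+
  have injg: "inj_on ?g (gconsts s1)"
    by (rule ext_id_inj[OF b1])
  have outg: "\<forall>c\<in>gconsts s1 - C. f c \<notin> C" using b1 unfolding bij_betw_def by auto
  have Bs1: "subst_state \<theta>1 ?B \<subseteq> s1" using assms(9) by (simp add: oi_subsumes_def)
  have injA: "inj_on (\<lambda>a. (fst a, map ?g (snd a))) s1"
    by (rule rename_inj[OF injg])
  have key: "indist C (successor s1 \<theta>1 ?B (fst r)) s' = indist C (successor s2 \<theta>2 ?B (fst r)) s'"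
    if "r \<in> set (rules \<delta>)" for r
  proof -
    let ?H = "fst r"
    have HC: "abs_consts ?H \<subseteq> C" using tc that unfolding trans_consts_def by blast
    have HV: "abs_vars ?H \<subseteq> abs_vars ?B" using wf that unfolding wf_trans_def by blast
    have Hs1: "gconsts (subst_state \<theta>1 ?H) \<subseteq> gconsts s1"
    proof -
      have "\<theta>1 ` abs_vars ?B \<subseteq> gconsts s1"
          using vars_in_subst[of \<theta>1 ?B] gconsts_mono[OF Bs1] by (rule order_trans)
      moreover have "\<theta>1 ` abs_vars ?H \<subseteq> \<theta>1 ` abs_vars ?B" using HV by (rule image_mono)
      ultimately have "abs_consts ?H \<union> \<theta>1 ` abs_vars ?H \<subseteq> gconsts s1"
        using HC Cs1 by (meson Un_least order_trans)
      then show ?thesis using gconsts_subst[of \<theta>1 ?H] by (rule order_trans[rotated])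
    qed
    have gs: "gconsts (successor s1 \<theta>1 ?B ?H) \<subseteq> gconsts s1"
      unfolding successor_def gconsts_Un using gconsts_mono[of "s1 - subst_state \<theta>1 ?B" s1] Hs1
      by (meson Diff_subset Un_least)
    have "rename ?g (successor s1 \<theta>1 ?B ?H)
        = rename ?g (s1 - subst_state \<theta>1 ?B) \<union> rename ?g (subst_state \<theta>1 ?H)"
      unfolding successor_def rename_def by (rule image_Un)
    also have "rename ?g (s1 - subst_state \<theta>1 ?B) = s2 - subst_state \<theta>2 ?B"
    proof -
      have "rename ?g (s1 - subst_state \<theta>1 ?B) = rename ?g s1 - rename ?g (subst_state \<theta>1 ?B)"
        unfolding rename_def by (rule inj_on_image_set_diff[OF injA]) (use Bs1 in auto)
      then show ?thesis using r12 subst_state_rename[OF BC assms(10)] by simp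
    qed
    also have "rename ?g (subst_state \<theta>1 ?H) = subst_state \<theta>2 ?H"
      using subst_state_rename[OF HC assms(10)] by simp
    finally have eq: "rename ?g (successor s1 \<theta>1 ?B ?H) = successor s2 \<theta>2 ?B ?H"
      unfolding successor_def .
    have i1: "inj_on ?g (gconsts (successor s1 \<theta>1 ?B ?H))" using inj_on_subset[OF injg gs] .
    have o1: "\<forall>c\<in>gconsts (successor s1 \<theta>1 ?B ?H) - C. f c \<notin> C" using gs outg by blast
    show ?thesis by (rule indist_transfer[OF i1 o1 eq[symmetric]])
  qed
  show "class_prob C s1 \<theta>1 \<delta> s' = class_prob C s2 \<theta>2 \<delta> s'"
    unfolding class_prob_def using key by (rule sum_comp_cong)
qed

end
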